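(* For an idempotent semiring $S$ the following are equivalent: (1) $S$ satisfies $x\approx xyx+x+xyx$ (equivalently, $\mathcal{D}^{\bullet}$ is the least distributive lattice congruence on $S$); (2) $S$ satisfies both identities $xz\approx xz+xyz$ and $xz\approx xyz+xz$; (3) $S$ satisfies $xz\approx xyz+xz+xyz$.
   Context: An idempotent semiring is an algebra $(S,+,\cdot)$ with $(S,+)$, $(S,\cdot)$ bands and both distributive laws; addition not assumed commutative. $a\,\mathcal{D}^{\bullet}\,b$ iff $aba=a$ and $bab=b$. A distributive lattice congruence is a congruence $\rho$ with $S/\rho$ satisfying $x+y\approx y+x$, $xy\approx yx$, $x+xy\approx x$. *)

theory Defs
  imports Main
begin

text \<open>An idempotent semiring (S,+,.): both reducts are bands (associative and
idempotent), and both distributive laws hold. Addition is not assumed commutative.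
The carrier is the whole type 'a.\<close>

definition idem_semiring :: "('a \<Rightarrow> 'a \<Rightarrow> 'a) \<Rightarrow> ('a \<Rightarrow> 'a \<Rightarrow> 'a) \<Rightarrow> bool" where
  "idem_semiring add mult \<longleftrightarrow>
     (\<forall>x y z. add (add x y) z = add x (add y z)) \<and>
     (\<forall>x. add x x = x) \<and>
     (\<forall>x y z. mult (mult x y) z = mult x (mult y z)) \<and>
     (\<forall>x. mult x x = x) \<and>
     (\<forall>x y z. mult x (add y z) = add (mult x y) (mult x z)) \<and>
     (\<forall>x y z. mult (add x y) z = add (mult x z) (mult y z))"

end

theory Submission
  imports Defs
begin

lemma aux1:
  fixes add mult :: "'a \<Rightarrow> 'a \<Rightarrow> 'a"
  assumes C: "\<And>x y z. mult (mult x y) z = mult x (mult y z)" and D: "\<And>x. mult x x = x"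
  and E: "\<And>x y z. mult x (add y z) = add (mult x y) (mult x z)"
  and F: "\<And>x y z. mult (add x y) z = add (mult x z) (mult y z)"
  and H1: "\<And>x y. x = add x (mult x (mult y x))"
  shows "mult x z = add (mult x z) (mult x (mult y z))"
proof -
  have "\<forall>a aa ab. mult (add (mult a ab) aa) ab = mult (add a aa) ab"
    using C D F by presburger
  then have "\<forall>a aa ab. mult a (mult ab (mult a (mult (add a aa) ab))) = mult a ab"
    by (metis (no_types) C D E F H1)
  then show ?thesis
    by (metis C D E F)
qed

lemma aux2:
  fixes add mult :: "'a \<Rightarrow> 'a \<Rightarrow> 'a"
  assumes C: "\<And>x y z. mult (mult x y) z = mult x (mult y z)" and D: "\<And>x. mult x x = x"
  and E: "\<And>x y z. mult x (add y z) = add (mult x y) (mult x z)"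
  and F: "\<And>x y z. mult (add x y) z = add (mult x z) (mult y z)"
  and H2: "\<And>x y. x = add (mult x (mult y x)) x"
  shows "mult x z = add (mult x (mult y z)) (mult x z)"
proof -
  have f1: "\<forall>a aa. add (mult aa a) aa = mult aa (add a aa)"
    by (simp add: D E)
  have f2: "\<forall>a aa. add (mult a aa) aa = mult (add a aa) aa"
    by (simp add: D F)
  have f3: "\<forall>a aa. mult a (mult a aa) = mult a aa"
    by (metis (full_types) C D)
  have f4: "\<forall>a aa. mult aa (mult (add a aa) aa) = aa"
    using f2 f1 H2 by auto
  then have f5: "\<forall>a aa ab. mult a (mult ab (mult a (mult (add aa a) ab))) = mult a ab"
    using f1 by (metis (no_types) C E F)
  have "\<forall>a aa ab. mult a (mult (add aa a) ab) = mult a (mult (add aa ab) ab)"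
    using f3 f2 by (metis E F)
  then show ?thesis
    using f5 f4 f3 f2 f1 by (metis (no_types) C F)
qed

theorem lemma4p5:
  fixes add mult :: "'a \<Rightarrow> 'a \<Rightarrow> 'a"
  assumes "idem_semiring add mult"
  shows "((\<forall>x y. x = add (add (mult (mult x y) x) x) (mult (mult x y) x))
            \<longleftrightarrow>
          ((\<forall>x y z. mult x z = add (mult x z) (mult (mult x y) z)) \<and>
           (\<forall>x y z. mult x z = add (mult (mult x y) z) (mult x z))))
       \<and>
         ((\<forall>x y z. mult x z = add (mult x z) (mult (mult x y) z)) \<and>
          (\<forall>x y z. mult x z = add (mult (mult x y) z) (mult x z))
            \<longleftrightarrow>
          (\<forall>x y z. mult x z = add (add (mult (mult x y) z) (mult x z)) (mult (mult x y) z)))"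
proof -
  have A: "\<And>x y z. add (add x y) z = add x (add y z)" and B: "\<And>x. add x x = x"
  and C: "\<And>x y z. mult (mult x y) z = mult x (mult y z)" and D: "\<And>x. mult x x = x"
  and E: "\<And>x y z. mult x (add y z) = add (mult x y) (mult x z)"
  and F: "\<And>x y z. mult (add x y) z = add (mult x z) (mult y z)"
    using assms unfolding idem_semiring_def by blast+
  have P1: "(\<forall>x y z. mult x z = add (mult x z) (mult (mult x y) z)) \<and>
           (\<forall>x y z. mult x z = add (mult (mult x y) z) (mult x z))"
    if h: "\<forall>x y. x = add (add (mult (mult x y) x) x) (mult (mult x y) x)"
  proof -
    have H1: "\<And>x y. x = add x (mult x (mult y x))"
    proof -
      fix x y
      have "add x (mult x (mult y x)) = add (add (add (mult (mult x y) x) x) (mult (mult x y) x)) (mult (mult x y) x)"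
        using h C by metis
      also have "\<dots> = x" using A B h by metis
      finally show "x = add x (mult x (mult y x))" by simp
    qed
    have H2: "\<And>x y. x = add (mult x (mult y x)) x"
    proof -
      fix x y
      have "add (mult x (mult y x)) x = add (mult (mult x y) x) (add (add (mult (mult x y) x) x) (mult (mult x y) x))"
        using h C by metis
      also have "\<dots> = x" using A B h by metis
      finally show "x = add (mult x (mult y x)) x" by simp
    qed
    show ?thesis using aux1[of mult add, OF C D E F H1] aux2[of mult add, OF C D E F H2] C by metis
  qed
  have P2: "\<forall>x y. x = add (add (mult (mult x y) x) x) (mult (mult x y) x)"
    if h: "(\<forall>x y z. mult x z = add (mult x z) (mult (mult x y) z)) \<and>
           (\<forall>x y z. mult x z = add (mult (mult x y) z) (mult x z))"
    using h D A by metis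
  have P3: "(\<forall>x y z. mult x z = add (add (mult (mult x y) z) (mult x z)) (mult (mult x y) z))"
    if h: "(\<forall>x y z. mult x z = add (mult x z) (mult (mult x y) z)) \<and>
           (\<forall>x y z. mult x z = add (mult (mult x y) z) (mult x z))"
    using h A by metis
  have P4: "(\<forall>x y z. mult x z = add (mult x z) (mult (mult x y) z)) \<and>
           (\<forall>x y z. mult x z = add (mult (mult x y) z) (mult x z))"
    if h: "(\<forall>x y z. mult x z = add (add (mult (mult x y) z) (mult x z)) (mult (mult x y) z))"
  proof (intro conjI allI)
    fix x y z
    show "mult x z = add (mult x z) (mult (mult x y) z)"
      using h A B by metis
    show "mult x z = add (mult (mult x y) z) (mult x z)"
      using h A B by metis
  qed
  show ?thesis using P1 P2 P3 P4 by blast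
qed

end
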